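(* Let $W\in\mathbb{R}^n$ have i.i.d. $\mathcal{N}(0,\sigma^2)$ entries. (i) Let $\mathcal{I}$ be a non-random subset of $\{1,\dots,k\}$ with $\#(\mathcal{I})\le n_{\mathcal{I}}$, where $n_{\mathcal{I}}$ is deterministic. Then $$P\Big(\frac{1}{\sigma^2}\|P_{V_{\mathcal{I}}}[W]\|_2^2\ge z^2\Big)\le \exp(-z^2/16)$$ for every $z$ with $z^2\ge 4n_{\mathcal{I}}$. (ii) If instead $\mathcal{I}$ is a random subset of the form $\{(j,t): j\in A,\ 1\le t\le t_j\}$ where $A$ is a random subset of $\{1,\dots,p\}$ of cardinality at most $L$ ($L$ a deterministic constant), then the same inequality holds for every $z$ with $z^2\ge 16\,L\,(t^*\vee\log p)$. In particular, for such a set, for every $k\ge 1$ there exists a constant $C_k$ such that $$E\Big(\frac{1}{\sigma^2}\|P_{V_{\mathcal{I}}}[W]\|_2^2\Big)^k\le C_k\,L^k\,(t^*\vee\log p)^k.$$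
   Context: $\tilde X\in\mathbb{R}^{n\times k}$ is a fixed (deterministic) matrix; $V_{\mathcal{I}}$ is the span of its columns indexed by $\mathcal{I}$ and $P_{V_{\mathcal{I}}}$ the orthogonal projection onto $V_{\mathcal{I}}$. $\mathcal{G}_1,\dots,\mathcal{G}_p$ is a partition of $\{1,\dots,k\}$ with $t_j=\#\mathcal{G}_j$, $t^*=\max_j t_j$; index $\ell$ is written $(j,t)$ with $j$ its group and $t\in\{1,\dots,t_j\}$ its rank inside $\mathcal{G}_j$. *)

theory Defs
  imports "HOL-Probability.Probability"
begin

text \<open>Vectors of R^n are represented as functions nat => real, only the
coordinates i < n being relevant.  The design matrix is X :: nat => nat => real
with entry (i,l) for row i < n and column l in {1..k}.\<close>

definition vinner :: "nat \<Rightarrow> (nat \<Rightarrow> real) \<Rightarrow> (nat \<Rightarrow> real) \<Rightarrow> real" where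
  "vinner n x y = (\<Sum>i<n. x i * y i)"

definition sqnorm :: "nat \<Rightarrow> (nat \<Rightarrow> real) \<Rightarrow> real" where
  "sqnorm n x = vinner n x x"

definition colvec :: "nat \<Rightarrow> (nat \<Rightarrow> nat \<Rightarrow> real) \<Rightarrow> nat \<Rightarrow> (nat \<Rightarrow> real)" where
  "colvec n X l = (\<lambda>i. if i < n then X i l else 0)"

definition colspan :: "nat \<Rightarrow> (nat \<Rightarrow> nat \<Rightarrow> real) \<Rightarrow> nat set \<Rightarrow> (nat \<Rightarrow> real) set" where
  "colspan n X I = {v. \<exists>c. v = (\<lambda>i. \<Sum>l\<in>I. c l * colvec n X l i)}"

definition proj :: "nat \<Rightarrow> (nat \<Rightarrow> nat \<Rightarrow> real) \<Rightarrow> nat set \<Rightarrow> (nat \<Rightarrow> real) \<Rightarrow> (nat \<Rightarrow> real)" where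
  "proj n X I w = (THE v. v \<in> colspan n X I \<and>
      (\<forall>u\<in>colspan n X I. vinner n (\<lambda>i. w i - v i) u = 0))"

definition iid_gaussian :: "'a measure \<Rightarrow> ('a \<Rightarrow> nat \<Rightarrow> real) \<Rightarrow> nat \<Rightarrow> real \<Rightarrow> bool" where
  "iid_gaussian M W n \<sigma> \<longleftrightarrow> prob_space M \<and> \<sigma> > 0 \<and>
     prob_space.indep_vars M (\<lambda>_. borel) (\<lambda>i \<omega>. W \<omega> i) {..<n} \<and>
     (\<forall>i<n. distributed M lborel (\<lambda>\<omega>. W \<omega> i) (normal_density 0 \<sigma>))"

definition is_group_partition :: "nat \<Rightarrow> nat \<Rightarrow> (nat \<Rightarrow> nat set) \<Rightarrow> bool" where
  "is_group_partition p k G \<longleftrightarrow> p \<ge> 1 \<and> (\<forall>j\<in>{1..p}. G j \<noteq> {}) \<and>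
     disjoint_family_on G {1..p} \<and> (\<Union>j\<in>{1..p}. G j) = {1..k}"

definition tstar :: "nat \<Rightarrow> (nat \<Rightarrow> nat set) \<Rightarrow> nat" where
  "tstar p G = Max ((\<lambda>j. card (G j)) ` {1..p})"

text \<open>A random subset A of {1..p} with card at most L (measurable as a
random element of the finite set of subsets).\<close>
definition random_group_set :: "'a measure \<Rightarrow> ('a \<Rightarrow> nat set) \<Rightarrow> nat \<Rightarrow> nat \<Rightarrow> bool" where
  "random_group_set M A p L \<longleftrightarrow>
     (\<forall>\<omega>\<in>space M. A \<omega> \<subseteq> {1..p} \<and> card (A \<omega>) \<le> L) \<and>
     (\<forall>S. {\<omega>\<in>space M. A \<omega> = S} \<in> sets M)"

end

theory Submission
  imports Defs
begin


definition lincomb :: "nat \<Rightarrow> (nat \<Rightarrow> nat \<Rightarrow> real) \<Rightarrow> (nat \<Rightarrow> real) \<Rightarrow> nat \<Rightarrow> real" where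
  "lincomb d u a = (\<lambda>i. \<Sum>r<d. a r * u r i)"

definition orthonormal :: "nat \<Rightarrow> nat \<Rightarrow> (nat \<Rightarrow> nat \<Rightarrow> real) \<Rightarrow> bool" where
  "orthonormal n d u \<longleftrightarrow> (\<forall>r<d. \<forall>s<d. vinner n (u r) (u s) = (if r = s then 1 else 0))
      \<and> (\<forall>r<d. \<forall>i\<ge>n. u r i = 0)"

lemma vinner_sym: "vinner n x y = vinner n y x"
  by (simp add: vinner_def mult.commute)

lemma vinner_lincomb_left: "vinner n (lincomb d u a) x = (\<Sum>r<d. a r * vinner n (u r) x)"
  unfolding vinner_def lincomb_def
  by (simp add: sum_distrib_right sum_distrib_left mult.assoc sum.swap[of _ "{..<n}"])

lemma vinner_lincomb_right: "vinner n x (lincomb d u a) = (\<Sum>r<d. a r * vinner n x (u r))"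
  using vinner_lincomb_left[of n d u a x] by (simp add: vinner_sym)

lemma vinner_diff_left: "vinner n (\<lambda>i. f i - g i) x = vinner n f x - vinner n g x"
  unfolding vinner_def by (simp add: left_diff_distrib sum_subtractf)

lemma vinner_lincomb_on: 
  assumes "orthonormal n d u" "s < d"
  shows "vinner n (lincomb d u a) (u s) = a s"
proof -
  have "vinner n (lincomb d u a) (u s) = (\<Sum>r<d. a r * (if r = s then 1 else 0))"
    using assms unfolding vinner_lincomb_left orthonormal_def by (intro sum.cong) auto
  also have "\<dots> = (\<Sum>r<d. if r = s then a r else 0)" by (intro sum.cong) auto
  also have "\<dots> = a s" using assms(2) by (simp add: sum.delta)
  finally show ?thesis .
qed

lemma vinner_lincomb_lincomb:
  assumes "orthonormal n d u"
  shows "vinner n (lincomb d u a) (lincomb d u b) = (\<Sum>r<d. a r * b r)"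
  unfolding vinner_lincomb_right using vinner_lincomb_on[OF assms]
  by (intro sum.cong) (auto simp: mult.commute)

lemma sqnorm_zero:
  assumes "sqnorm n x = 0" "i < n" shows "x i = 0"
proof -
  have "(\<Sum>j<n. x j * x j) = 0" using assms unfolding sqnorm_def vinner_def by simp
  hence "\<forall>j\<in>{..<n}. x j * x j = 0" by (subst (asm) sum_nonneg_eq_0_iff) auto
  thus ?thesis using assms by auto
qed

lemma sqnorm_nonneg: "sqnorm n x \<ge> 0"
  unfolding sqnorm_def vinner_def by (auto intro: sum_nonneg)

lemma colspan_zero: "v \<in> colspan n X I \<Longrightarrow> i \<ge> n \<Longrightarrow> v i = 0"
  unfolding colspan_def colvec_def by auto

lemma colspan_comb:
  assumes "v \<in> colspan n X I" "w \<in> colspan n X I"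
  shows "(\<lambda>i. \<alpha> * v i + \<beta> * w i) \<in> colspan n X I"
proof -
  obtain c c' where "v = (\<lambda>i. \<Sum>l\<in>I. c l * colvec n X l i)" "w = (\<lambda>i. \<Sum>l\<in>I. c' l * colvec n X l i)"
    using assms unfolding colspan_def by auto
  thus ?thesis unfolding colspan_def
    by (auto intro!: exI[of _ "\<lambda>l. \<alpha> * c l + \<beta> * c' l"]
        simp: sum_distrib_left sum.distrib algebra_simps)
qed

lemma colspan_lincomb:
  assumes "\<forall>r<d. u r \<in> colspan n X I"
  shows "lincomb d u a \<in> colspan n X I"
proof -
  from assms have "\<forall>r\<in>{..<d}. \<exists>c. u r = (\<lambda>i. \<Sum>l\<in>I. c l * colvec n X l i)"
    unfolding colspan_def by auto
  then obtain c where c: "\<forall>r\<in>{..<d}. u r = (\<lambda>i. \<Sum>l\<in>I. c r l * colvec n X l i)"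
    by metis
  have "lincomb d u a = (\<lambda>i. \<Sum>l\<in>I. (\<Sum>r<d. a r * c r l) * colvec n X l i)"
    unfolding lincomb_def using c
    by (auto simp: sum_distrib_left sum_distrib_right mult.assoc intro!: ext sum.swap)
  thus ?thesis unfolding colspan_def by auto
qed

lemma colspan_mono:
  assumes "finite I" "l \<notin> I" "v \<in> colspan n X I" shows "v \<in> colspan n X (insert l I)"
proof -
  obtain c where c: "v = (\<lambda>i. \<Sum>l\<in>I. c l * colvec n X l i)" using assms unfolding colspan_def by auto
  have "v = (\<lambda>i. \<Sum>l'\<in>insert l I. (c(l:=0)) l' * colvec n X l' i)"
    using assms(1,2) by (auto simp: c intro!: ext sum.cong)
  thus ?thesis unfolding colspan_def by blast
qed

lemma colvec_in: 
  assumes "finite I" "l \<in> I" shows "colvec n X l \<in> colspan n X I"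
proof -
  have "colvec n X l = (\<lambda>i. \<Sum>l'\<in>I. (if l' = l then 1 else 0) * colvec n X l' i)"
  proof
    fix i
    have "(\<Sum>l'\<in>I. (if l' = l then 1 else 0) * colvec n X l' i) = (\<Sum>l'\<in>I. if l' = l then colvec n X l' i else 0)"
      by (intro sum.cong) auto
    thus "colvec n X l i = (\<Sum>l'\<in>I. (if l' = l then 1 else 0) * colvec n X l' i)"
      using assms by (simp add: sum.delta)
  qed
  thus ?thesis unfolding colspan_def by (intro CollectI exI[of _ "\<lambda>l'. if l' = l then 1 else 0"])
qed



definition gsprop :: "nat \<Rightarrow> (nat \<Rightarrow> nat \<Rightarrow> real) \<Rightarrow> nat set \<Rightarrow> nat \<Rightarrow> (nat \<Rightarrow> nat \<Rightarrow> real) \<Rightarrow> bool" where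
  "gsprop n X I d u \<longleftrightarrow> d \<le> card I \<and> orthonormal n d u \<and> (\<forall>r<d. u r \<in> colspan n X I)
     \<and> (\<forall>l\<in>I. \<exists>a. colvec n X l = lincomb d u a)"

lemma lincomb_Suc: "lincomb (Suc d) u a = (\<lambda>i. lincomb d u a i + a d * u d i)"
  unfolding lincomb_def by auto

lemma lincomb_upd: "lincomb d (u(d := v)) a = lincomb d u a"
  unfolding lincomb_def by (intro ext sum.cong) auto

lemma gs_exists:
  assumes "finite I" shows "\<exists>d u. gsprop n X I d u"
  using assms
proof (induction I rule: finite_induct)
  case empty
  show ?case by (rule exI[of _ 0], rule exI[of _ "\<lambda>_ _. 0"]) (auto simp: gsprop_def orthonormal_def)
next
  case (insert l I)
  then obtain d u where gp: "gsprop n X I d u" by blast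
  hence on: "orthonormal n d u" and dle: "d \<le> card I" and uin: "\<forall>r<d. u r \<in> colspan n X I"
    and cv: "\<forall>l\<in>I. \<exists>a. colvec n X l = lincomb d u a" by (auto simp: gsprop_def)
  have uin': "\<forall>r<d. u r \<in> colspan n X (insert l I)" using uin colspan_mono[OF insert(1,2)] by auto
  define a where "a = (\<lambda>r. vinner n (u r) (colvec n X l))"
  define y where "y = (\<lambda>i. colvec n X l i - lincomb d u a i)"
  have yorth: "vinner n y (u s) = 0" if "s < d" for s
    unfolding y_def vinner_diff_left using vinner_lincomb_on[OF on that] by (simp add: a_def vinner_sym)
  have lcin: "lincomb d u a \<in> colspan n X (insert l I)" by (rule colspan_lincomb[OF uin'])
  have cvin: "colvec n X l \<in> colspan n X (insert l I)" by (rule colvec_in) (use insert in auto)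
  have yin: "y \<in> colspan n X (insert l I)"
    using colspan_comb[OF cvin lcin, of 1 "-1"] by (simp add: y_def)
  have card: "card (insert l I) = Suc (card I)" using insert by simp
  show ?case
  proof (cases "sqnorm n y = 0")
    case True
    have "y = (\<lambda>_. 0)"
    proof
      fix i show "y i = 0"
        using sqnorm_zero[OF True, of i] colspan_zero[OF yin, of i] by (cases "i < n") auto
    qed
    hence "colvec n X l = lincomb d u a" unfolding y_def by (metis diff_eq_eq add_0 ext)
    hence "gsprop n X (insert l I) d u" using gp uin' card unfolding gsprop_def by auto
    thus ?thesis by blast
  next
    case False
    define \<nu> where "\<nu> = sqrt (sqnorm n y)"
    have \<nu>pos: "\<nu> > 0" using False sqnorm_nonneg[of n y] unfolding \<nu>_def by auto
    define u' where "u' = u(d := (\<lambda>i. y i / \<nu>))"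
    have \<nu>sq: "\<nu> * \<nu> = sqnorm n y" unfolding \<nu>_def using sqnorm_nonneg[of n y] by simp
    have on': "orthonormal n (Suc d) u'"
      unfolding orthonormal_def
    proof (intro conjI allI impI)
      fix r s assume r: "r < Suc d" and s: "s < Suc d"
      have yy: "vinner n (\<lambda>i. y i / \<nu>) (\<lambda>i. y i / \<nu>) = 1"
        using \<nu>pos \<nu>sq False unfolding vinner_def sqnorm_def
        by (simp add: sum_divide_distrib[symmetric] field_simps)
      have yu: "vinner n (\<lambda>i. y i / \<nu>) (u t) = 0" if "t < d" for t
        using yorth[OF that] unfolding vinner_def by (simp add: sum_divide_distrib[symmetric])
      show "vinner n (u' r) (u' s) = (if r = s then 1 else 0)"
        using r s on yy yu[of r] yu[of s] unfolding u'_def orthonormal_def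
        by (cases "r = d"; cases "s = d") (auto simp: vinner_sym less_Suc_eq)
    next
      fix r i assume "r < Suc d" "n \<le> i"
      thus "u' r i = 0" using on colspan_zero[OF yin] unfolding u'_def orthonormal_def
        by (auto simp: less_Suc_eq)
    qed
    have u'in: "\<forall>r<Suc d. u' r \<in> colspan n X (insert l I)"
      using uin' colspan_comb[OF yin yin, of "1/\<nu>" 0] unfolding u'_def
      by (auto simp: less_Suc_eq)
    have cv': "\<forall>l'\<in>insert l I. \<exists>b. colvec n X l' = lincomb (Suc d) u' b"
    proof
      fix l' assume "l' \<in> insert l I"
      then consider "l' = l" | "l' \<in> I" by auto
      thus "\<exists>b. colvec n X l' = lincomb (Suc d) u' b"
      proof cases
        case 1
        have "colvec n X l = lincomb (Suc d) u' (a(d := \<nu>))"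
          unfolding lincomb_Suc u'_def lincomb_upd
          using \<nu>pos by (auto simp: y_def lincomb_def intro!: ext sum.cong)
        thus ?thesis using 1 by blast
      next
        case 2
        then obtain b where "colvec n X l' = lincomb d u b" using cv by blast
        hence "colvec n X l' = lincomb (Suc d) u' (b(d := 0))"
          unfolding lincomb_Suc u'_def lincomb_upd by (auto simp: lincomb_def intro!: ext sum.cong)
        thus ?thesis by blast
      qed
    qed
    have "gsprop n X (insert l I) (Suc d) u'"
      unfolding gsprop_def using on' u'in cv' dle card by auto
    thus ?thesis by blast
  qed
qed

lemma colspan_sub_lincomb:
  assumes "finite I" "gsprop n X I d u" "v \<in> colspan n X I"
  shows "\<exists>b. v = lincomb d u b"
proof -
  obtain c where c: "v = (\<lambda>i. \<Sum>l\<in>I. c l * colvec n X l i)" using assms unfolding colspan_def by auto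
  from assms(2) have "\<forall>l\<in>I. \<exists>a. colvec n X l = lincomb d u a" by (auto simp: gsprop_def)
  then obtain a where a: "\<forall>l\<in>I. colvec n X l = lincomb d u (a l)" by metis
  have "v = lincomb d u (\<lambda>r. \<Sum>l\<in>I. c l * a l r)"
    unfolding c lincomb_def using a
    by (auto simp: lincomb_def sum_distrib_left sum_distrib_right mult.assoc intro!: ext sum.swap)
  thus ?thesis by blast
qed

lemma proj_gs:
  assumes "finite I" "gsprop n X I d u"
  shows "proj n X I w = lincomb d u (\<lambda>r. vinner n (u r) w)"
proof -
  have on: "orthonormal n d u" and uin: "\<forall>r<d. u r \<in> colspan n X I" using assms by (auto simp: gsprop_def)
  define v where "v = lincomb d u (\<lambda>r. vinner n (u r) w)"
  have vin: "v \<in> colspan n X I" unfolding v_def by (rule colspan_lincomb[OF uin])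
  have orth: "vinner n (\<lambda>i. w i - v i) x = 0" if xin: "x \<in> colspan n X I" for x
  proof -
    obtain b where b: "x = lincomb d u b" using colspan_sub_lincomb[OF assms xin] by blast
    have "vinner n (\<lambda>i. w i - v i) x = (\<Sum>r<d. b r * (vinner n w (u r) - vinner n v (u r)))"
      unfolding b vinner_lincomb_right vinner_diff_left by (simp add: right_diff_distrib sum_subtractf)
    also have "\<dots> = 0" unfolding v_def using vinner_lincomb_on[OF on]
      by (intro sum.neutral) (auto simp: vinner_sym)
    finally show ?thesis .
  qed
  have "proj n X I w = v"
    unfolding proj_def
  proof (rule the_equality)
    show "v \<in> colspan n X I \<and> (\<forall>u\<in>colspan n X I. vinner n (\<lambda>i. w i - v i) u = 0)"
      using vin orth by auto
  next
    fix v' assume v': "v' \<in> colspan n X I \<and> (\<forall>u\<in>colspan n X I. vinner n (\<lambda>i. w i - v' i) u = 0)"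
    define e where "e = (\<lambda>i. 1 * v i + (-1) * v' i)"
    have ein: "e \<in> colspan n X I" unfolding e_def using colspan_comb[OF vin, of v' 1 "-1"] v' by blast
    have "vinner n (\<lambda>i. w i - v' i) e - vinner n (\<lambda>i. w i - v i) e = 0" using v' orth ein by auto
    moreover have "(\<lambda>i. (w i - v' i) - (w i - v i)) = e" unfolding e_def by auto
    ultimately have "sqnorm n e = 0" unfolding sqnorm_def using vinner_diff_left[of n "\<lambda>i. w i - v' i" "\<lambda>i. w i - v i" e]
      by simp
    show "v' = v"
    proof
      fix i show "v' i = v i"
        using sqnorm_zero[OF \<open>sqnorm n e = 0\<close>, of i] colspan_zero[OF vin, of i] colspan_zero[of v' n X I i] v'
        unfolding e_def by (cases "i < n") auto
    qed
  qed
  thus ?thesis unfolding v_def .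
qed

lemma sqnorm_proj:
  assumes "finite I" "gsprop n X I d u"
  shows "sqnorm n (proj n X I w) = (\<Sum>r<d. (vinner n (u r) w)\<^sup>2)"
  unfolding proj_gs[OF assms] sqnorm_def using assms
  by (subst vinner_lincomb_lincomb) (auto simp: gsprop_def power2_eq_square)



lemma nn_integral_normal_density: "\<sigma> > 0 \<Longrightarrow> (\<integral>\<^sup>+t. ennreal (normal_density \<mu> \<sigma> t) \<partial>lborel) = 1"
  by (subst nn_integral_eq_integral) (auto intro: integrable_normal_density simp: integral_normal_density)

lemma gauss_pointwise:
  fixes \<sigma> a b lam t :: real
  assumes s: "\<sigma> > 0" and a: "a = 1 - 2 * lam * \<sigma>\<^sup>2" "a > 0"
  shows "normal_density 0 \<sigma> t * exp (b * t + lam * t\<^sup>2) =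
     exp (b\<^sup>2 * \<sigma>\<^sup>2 / (2 * a)) / sqrt a * normal_density (b * \<sigma>\<^sup>2 / a) (\<sigma> / sqrt a) t"
proof -
  have sa: "sqrt a > 0" using a by simp
  have sa2: "(sqrt a)\<^sup>2 = a" using a by simp
  have e: "-(t - b * \<sigma>\<^sup>2 / a)\<^sup>2 / (2 * (\<sigma> / sqrt a)\<^sup>2) + b\<^sup>2 * \<sigma>\<^sup>2 / (2 * a)
      = -(t - 0)\<^sup>2 / (2 * \<sigma>\<^sup>2) + (b * t + lam * t\<^sup>2)"
  proof -
    have q2: "(\<sigma> / sqrt a)\<^sup>2 = \<sigma>\<^sup>2 / a" using sa2 by (simp add: power_divide)
    have "-(t - b * \<sigma>\<^sup>2 / a)\<^sup>2 / (2 * (\<sigma> / sqrt a)\<^sup>2) + b\<^sup>2 * \<sigma>\<^sup>2 / (2 * a)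
        = - a * t\<^sup>2 / (2 * \<sigma>\<^sup>2) + b * t"
      unfolding q2 using s a(2) by (simp add: field_simps power2_eq_square)
    also have "- a * t\<^sup>2 / (2 * \<sigma>\<^sup>2) = -(t - 0)\<^sup>2 / (2 * \<sigma>\<^sup>2) + lam * t\<^sup>2"
      unfolding a(1) using s by (simp add: field_simps)
    finally show ?thesis by simp
  qed
  have c: "1 / sqrt (2 * pi * \<sigma>\<^sup>2) = 1 / sqrt a * (1 / sqrt (2 * pi * (\<sigma> / sqrt a)\<^sup>2))"
    using s a sa sa2 by (simp add: power_divide real_sqrt_divide real_sqrt_mult)
  have "normal_density 0 \<sigma> t * exp (b * t + lam * t\<^sup>2) =
        1 / sqrt (2 * pi * \<sigma>\<^sup>2) * exp (-(t - 0)\<^sup>2 / (2 * \<sigma>\<^sup>2) + (b * t + lam * t\<^sup>2))"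
    unfolding normal_density_def exp_add by simp
  also have "\<dots> = 1 / sqrt a * (1 / sqrt (2 * pi * (\<sigma> / sqrt a)\<^sup>2)) *
      exp (-(t - b * \<sigma>\<^sup>2 / a)\<^sup>2 / (2 * (\<sigma> / sqrt a)\<^sup>2) + b\<^sup>2 * \<sigma>\<^sup>2 / (2 * a))"
    unfolding e c ..
  also have "\<dots> = exp (b\<^sup>2 * \<sigma>\<^sup>2 / (2 * a)) / sqrt a * normal_density (b * \<sigma>\<^sup>2 / a) (\<sigma> / sqrt a) t"
    unfolding normal_density_def exp_add by simp
  finally show ?thesis .
qed

lemma gauss_int:
  fixes \<sigma> b lam :: real
  assumes s: "\<sigma> > 0" and a: "1 - 2 * lam * \<sigma>\<^sup>2 > 0"
  shows "(\<integral>\<^sup>+t. ennreal (normal_density 0 \<sigma> t * exp (b * t + lam * t\<^sup>2)) \<partial>lborel) =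
     ennreal (exp (b\<^sup>2 * \<sigma>\<^sup>2 / (2 * (1 - 2 * lam * \<sigma>\<^sup>2))) / sqrt (1 - 2 * lam * \<sigma>\<^sup>2))"
proof -
  define a where "a = 1 - 2 * lam * \<sigma>\<^sup>2"
  have "(\<integral>\<^sup>+t. ennreal (normal_density 0 \<sigma> t * exp (b * t + lam * t\<^sup>2)) \<partial>lborel) =
     (\<integral>\<^sup>+t. ennreal (exp (b\<^sup>2 * \<sigma>\<^sup>2 / (2 * a)) / sqrt a) * ennreal (normal_density (b * \<sigma>\<^sup>2 / a) (\<sigma> / sqrt a) t) \<partial>lborel)"
    using gauss_pointwise[OF s a_def] a unfolding a_def[symmetric]
    by (intro nn_integral_cong, subst ennreal_mult[symmetric]) (auto simp: field_simps)
  also have "\<dots> = ennreal (exp (b\<^sup>2 * \<sigma>\<^sup>2 / (2 * a)) / sqrt a)"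
    using s a unfolding a_def[symmetric] by (subst nn_integral_cmult) (auto simp: nn_integral_normal_density)
  finally show ?thesis unfolding a_def .
qed



context
  fixes M :: "'a measure" and W n \<sigma>
  assumes iid: "iid_gaussian M W n \<sigma>"
begin

interpretation prob_space M using iid unfolding iid_gaussian_def by auto

lemma sig_pos: "\<sigma> > 0" using iid unfolding iid_gaussian_def by auto

lemma Wm: "i < n \<Longrightarrow> (\<lambda>\<omega>. W \<omega> i) \<in> borel_measurable M"
  using iid unfolding iid_gaussian_def by (auto dest!: distributed_measurable)

lemma vinner_W_meas: "(\<lambda>\<omega>. vinner n c (W \<omega>)) \<in> borel_measurable M"
  unfolding vinner_def using Wm by (intro borel_measurable_sum) auto

lemma base_mgf:
  "(\<integral>\<^sup>+\<omega>. ennreal (exp (vinner n c (W \<omega>) / \<sigma>)) \<partial>M) = ennreal (exp (sqnorm n c / 2))"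
proof -
  have s: "\<sigma> > 0" by (rule sig_pos)
  have ind: "indep_vars (\<lambda>_. borel) (\<lambda>i \<omega>. W \<omega> i) {..<n}"
    using iid unfolding iid_gaussian_def by auto
  have ind2: "indep_vars (\<lambda>_. borel) (\<lambda>i \<omega>. ennreal (exp (c i * W \<omega> i / \<sigma>))) {..<n}"
    by (rule indep_vars_compose2[OF ind, where Y="\<lambda>i x. ennreal (exp (c i * x / \<sigma>))"]) auto
  have "(\<integral>\<^sup>+\<omega>. ennreal (exp (vinner n c (W \<omega>) / \<sigma>)) \<partial>M)
      = (\<integral>\<^sup>+\<omega>. (\<Prod>i<n. ennreal (exp (c i * W \<omega> i / \<sigma>))) \<partial>M)"
    unfolding vinner_def
    by (intro nn_integral_cong) (simp add: prod_ennreal sum_divide_distrib exp_sum)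
  also have "\<dots> = (\<Prod>i<n. \<integral>\<^sup>+\<omega>. ennreal (exp (c i * W \<omega> i / \<sigma>)) \<partial>M)"
    by (rule indep_vars_nn_integral[OF _ ind2]) auto
  also have "\<dots> = (\<Prod>i<n. ennreal (exp ((c i)\<^sup>2 / 2)))"
  proof (intro prod.cong refl)
    fix i assume i: "i \<in> {..<n}"
    have D: "distributed M lborel (\<lambda>\<omega>. W \<omega> i) (normal_density 0 \<sigma>)"
      using iid i unfolding iid_gaussian_def by auto
    have "(\<integral>\<^sup>+\<omega>. ennreal (exp (c i * W \<omega> i / \<sigma>)) \<partial>M)
        = (\<integral>\<^sup>+x. ennreal (normal_density 0 \<sigma> x) * ennreal (exp (c i * x / \<sigma>)) \<partial>lborel)"
      by (rule distributed_nn_integral[OF D, symmetric]) auto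
    also have "\<dots> = (\<integral>\<^sup>+x. ennreal (normal_density 0 \<sigma> x * exp ((c i / \<sigma>) * x + 0 * x\<^sup>2)) \<partial>lborel)"
      by (intro nn_integral_cong) (simp add: ennreal_mult)
    also have "\<dots> = ennreal (exp ((c i / \<sigma>)\<^sup>2 * \<sigma>\<^sup>2 / (2 * (1 - 2 * 0 * \<sigma>\<^sup>2))) / sqrt (1 - 2 * 0 * \<sigma>\<^sup>2))"
      by (rule gauss_int[OF s]) simp
    also have "\<dots> = ennreal (exp ((c i)\<^sup>2 / 2))"
      using s by (simp add: power_divide)
    finally show "(\<integral>\<^sup>+\<omega>. ennreal (exp (c i * W \<omega> i / \<sigma>)) \<partial>M) = ennreal (exp ((c i)\<^sup>2 / 2))" .
  qed
  also have "\<dots> = ennreal (exp (sqnorm n c / 2))"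
    unfolding sqnorm_def vinner_def
    by (simp add: prod_ennreal exp_sum sum_divide_distrib power2_eq_square)
  finally show ?thesis .
qed

lemma Zm[measurable]: "(\<lambda>\<omega>. vinner n c (W \<omega>) / \<sigma>) \<in> borel_measurable M"
  using vinner_W_meas by measurable

lemma exp_sq_gauss:
  assumes "0 \<le> lam" "lam < 1/2"
  shows "ennreal (exp (lam * z\<^sup>2)) =
    (\<integral>\<^sup>+t. ennreal (normal_density 0 1 t * exp ((sqrt (2 * lam) * z) * t + 0 * t\<^sup>2)) \<partial>lborel)"
proof -
  have "(\<integral>\<^sup>+t. ennreal (normal_density 0 1 t * exp ((sqrt (2 * lam) * z) * t + 0 * t\<^sup>2)) \<partial>lborel)
     = ennreal (exp ((sqrt (2 * lam) * z)\<^sup>2 * 1\<^sup>2 / (2 * (1 - 2 * 0 * 1\<^sup>2))) / sqrt (1 - 2 * 0 * 1\<^sup>2))"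
    by (rule gauss_int) auto
  also have "\<dots> = ennreal (exp (lam * z\<^sup>2))"
    using assms by (simp add: power_mult_distrib)
  finally show ?thesis by simp
qed

lemma mgf_ind:
  assumes on: "orthonormal n d u" and lam: "0 \<le> lam" "lam < 1/2"
  shows "e \<le> d \<Longrightarrow> \<forall>b. (\<integral>\<^sup>+\<omega>. ennreal (exp (lam * (\<Sum>r<e. (vinner n (u r) (W \<omega>) / \<sigma>)\<^sup>2)
             + (\<Sum>r<d. b r * (vinner n (u r) (W \<omega>) / \<sigma>)))) \<partial>M)
      = ennreal ((1 - 2 * lam) powr (- real e / 2) *
           exp ((\<Sum>r<d. (b r)\<^sup>2) / 2 + lam / (1 - 2 * lam) * (\<Sum>r<e. (b r)\<^sup>2)))"
proof (induction e)
  case 0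
  show ?case
  proof
    fix b
    have "(\<integral>\<^sup>+\<omega>. ennreal (exp (lam * (\<Sum>r<0. (vinner n (u r) (W \<omega>) / \<sigma>)\<^sup>2)
             + (\<Sum>r<d. b r * (vinner n (u r) (W \<omega>) / \<sigma>)))) \<partial>M)
        = (\<integral>\<^sup>+\<omega>. ennreal (exp (vinner n (lincomb d u b) (W \<omega>) / \<sigma>)) \<partial>M)"
      unfolding vinner_lincomb_left by (simp add: sum_divide_distrib)
    also have "\<dots> = ennreal (exp (sqnorm n (lincomb d u b) / 2))" by (rule base_mgf)
    also have "\<dots> = ennreal ((1 - 2 * lam) powr (- real 0 / 2) *
           exp ((\<Sum>r<d. (b r)\<^sup>2) / 2 + lam / (1 - 2 * lam) * (\<Sum>r<0. (b r)\<^sup>2)))"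
      unfolding sqnorm_def vinner_lincomb_lincomb[OF on] using lam by (simp add: power2_eq_square)
    finally show "(\<integral>\<^sup>+\<omega>. ennreal (exp (lam * (\<Sum>r<0. (vinner n (u r) (W \<omega>) / \<sigma>)\<^sup>2)
             + (\<Sum>r<d. b r * (vinner n (u r) (W \<omega>) / \<sigma>)))) \<partial>M)
      = ennreal ((1 - 2 * lam) powr (- real 0 / 2) *
           exp ((\<Sum>r<d. (b r)\<^sup>2) / 2 + lam / (1 - 2 * lam) * (\<Sum>r<0. (b r)\<^sup>2)))" .
  qed
next
  case (Suc e)
  hence ed: "e < d" and IH: "\<forall>b. (\<integral>\<^sup>+\<omega>. ennreal (exp (lam * (\<Sum>r<e. (vinner n (u r) (W \<omega>) / \<sigma>)\<^sup>2)
             + (\<Sum>r<d. b r * (vinner n (u r) (W \<omega>) / \<sigma>)))) \<partial>M)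
      = ennreal ((1 - 2 * lam) powr (- real e / 2) *
           exp ((\<Sum>r<d. (b r)\<^sup>2) / 2 + lam / (1 - 2 * lam) * (\<Sum>r<e. (b r)\<^sup>2)))" by auto
  define Z where "Z = (\<lambda>r \<omega>. vinner n (u r) (W \<omega>) / \<sigma>)"
  define s where "s = sqrt (2 * lam)"
  define \<kappa> where "\<kappa> = lam / (1 - 2 * lam)"
  have s2: "s\<^sup>2 = 2 * lam" unfolding s_def using lam by simp
  have Zm'[measurable]: "Z r \<in> borel_measurable M" for r unfolding Z_def by measurable
  define f where "f b = (\<lambda>\<omega> t. ennreal (normal_density 0 1 t * exp (lam * (\<Sum>r<e. (Z r \<omega>)\<^sup>2)
             + (\<Sum>r<d. (b r + (if r = e then s * t else 0)) * Z r \<omega>))))" for b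
  have sumd: "(\<Sum>r<d. (b r + (if r = e then x else 0)) * Z r \<omega>) = (\<Sum>r<d. b r * Z r \<omega>) + x * Z e \<omega>" for b x \<omega>
  proof -
    have "(\<Sum>r<d. (b r + (if r = e then x else 0)) * Z r \<omega>) = (\<Sum>r<d. b r * Z r \<omega>) + (\<Sum>r<d. if r = e then x * Z r \<omega> else 0)"
      by (subst sum.distrib[symmetric]) (auto intro!: sum.cong simp: algebra_simps)
    also have "(\<Sum>r<d. if r = e then x * Z r \<omega> else 0) = x * Z e \<omega>" using ed by (simp add: sum.delta)
    finally show ?thesis .
  qed
  have sumsq: "(\<Sum>r<d. (b r + (if r = e then x else 0))\<^sup>2) = (\<Sum>r<d. (b r)\<^sup>2) + 2 * b e * x + x\<^sup>2" for b :: "nat \<Rightarrow> real" and x :: real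
  proof -
    have "(\<Sum>r<d. (b r + (if r = e then x else 0))\<^sup>2) = (\<Sum>r<d. (b r)\<^sup>2) + (\<Sum>r<d. if r = e then 2 * b r * x + x\<^sup>2 else 0)"
      by (subst sum.distrib[symmetric]) (auto intro!: sum.cong simp: power2_eq_square algebra_simps)
    also have "(\<Sum>r<d. if r = e then 2 * b r * x + x\<^sup>2 else 0) = 2 * b e * x + x\<^sup>2" using ed by (simp add: sum.delta)
    finally show ?thesis by simp
  qed
  have sume: "(\<Sum>r<e. (b r + (if r = e then x else 0))\<^sup>2) = (\<Sum>r<e. (b r)\<^sup>2)" for b :: "nat \<Rightarrow> real" and x :: real
    by (intro sum.cong) auto
  show ?case
  proof
    fix b
    have "(\<integral>\<^sup>+\<omega>. ennreal (exp (lam * (\<Sum>r<Suc e. (Z r \<omega>)\<^sup>2) + (\<Sum>r<d. b r * Z r \<omega>))) \<partial>M)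
        = (\<integral>\<^sup>+\<omega>. (\<integral>\<^sup>+t. f b \<omega> t \<partial>lborel) \<partial>M)"
    proof (intro nn_integral_cong)
      fix \<omega>
      have "ennreal (exp (lam * (\<Sum>r<Suc e. (Z r \<omega>)\<^sup>2) + (\<Sum>r<d. b r * Z r \<omega>)))
          = ennreal (exp (lam * (\<Sum>r<e. (Z r \<omega>)\<^sup>2) + (\<Sum>r<d. b r * Z r \<omega>))) * ennreal (exp (lam * (Z e \<omega>)\<^sup>2))"
        by (simp add: ennreal_mult[symmetric] exp_add[symmetric] algebra_simps)
      also have "\<dots> = ennreal (exp (lam * (\<Sum>r<e. (Z r \<omega>)\<^sup>2) + (\<Sum>r<d. b r * Z r \<omega>))) *
          (\<integral>\<^sup>+t. ennreal (normal_density 0 1 t * exp ((s * Z e \<omega>) * t + 0 * t\<^sup>2)) \<partial>lborel)"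
        unfolding s_def by (subst exp_sq_gauss[OF lam]) auto
      also have "\<dots> = (\<integral>\<^sup>+t. ennreal (exp (lam * (\<Sum>r<e. (Z r \<omega>)\<^sup>2) + (\<Sum>r<d. b r * Z r \<omega>))) *
           ennreal (normal_density 0 1 t * exp ((s * Z e \<omega>) * t + 0 * t\<^sup>2)) \<partial>lborel)"
        by (rule nn_integral_cmult[symmetric]) measurable
      also have "\<dots> = (\<integral>\<^sup>+t. f b \<omega> t \<partial>lborel)"
        unfolding f_def sumd
        by (intro nn_integral_cong) (simp add: ennreal_mult[symmetric] exp_add[symmetric] algebra_simps)
      finally show "ennreal (exp (lam * (\<Sum>r<Suc e. (Z r \<omega>)\<^sup>2) + (\<Sum>r<d. b r * Z r \<omega>)))
          = (\<integral>\<^sup>+t. f b \<omega> t \<partial>lborel)" .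
    qed
    also have "\<dots> = (\<integral>\<^sup>+t. (\<integral>\<^sup>+\<omega>. f b \<omega> t \<partial>M) \<partial>lborel)"
    proof -
      interpret P: pair_sigma_finite M lborel by unfold_locales
      have "case_prod (f b) \<in> borel_measurable (M \<Otimes>\<^sub>M lborel)" unfolding f_def by measurable
      thus ?thesis by (rule P.Fubini'[symmetric])
    qed
    also have "\<dots> = (\<integral>\<^sup>+t. ennreal ((1 - 2 * lam) powr (- real e / 2) *
           exp ((\<Sum>r<d. (b r)\<^sup>2) / 2 + \<kappa> * (\<Sum>r<e. (b r)\<^sup>2))) *
           ennreal (normal_density 0 1 t * exp ((b e * s) * t + lam * t\<^sup>2)) \<partial>lborel)"
    proof (intro nn_integral_cong)
      fix t
      have "(\<integral>\<^sup>+\<omega>. f b \<omega> t \<partial>M) = ennreal (normal_density 0 1 t) *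
          (\<integral>\<^sup>+\<omega>. ennreal (exp (lam * (\<Sum>r<e. (Z r \<omega>)\<^sup>2)
             + (\<Sum>r<d. (b r + (if r = e then s * t else 0)) * Z r \<omega>))) \<partial>M)"
        unfolding f_def by (subst nn_integral_cmult[symmetric]) (auto simp: ennreal_mult)
      also have "\<dots> = ennreal (normal_density 0 1 t) * ennreal ((1 - 2 * lam) powr (- real e / 2) *
           exp ((\<Sum>r<d. (b r + (if r = e then s * t else 0))\<^sup>2) / 2 + \<kappa> * (\<Sum>r<e. (b r + (if r = e then s * t else 0))\<^sup>2)))"
        using IH unfolding Z_def \<kappa>_def by simp
      also have "\<dots> = ennreal ((1 - 2 * lam) powr (- real e / 2) *
           exp ((\<Sum>r<d. (b r)\<^sup>2) / 2 + \<kappa> * (\<Sum>r<e. (b r)\<^sup>2))) *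
           ennreal (normal_density 0 1 t * exp ((b e * s) * t + lam * t\<^sup>2))"
        unfolding sumsq sume
        by (simp add: ennreal_mult[symmetric] exp_add[symmetric] algebra_simps power_mult_distrib s2 add_divide_distrib)
      finally show "(\<integral>\<^sup>+\<omega>. f b \<omega> t \<partial>M) = ennreal ((1 - 2 * lam) powr (- real e / 2) *
           exp ((\<Sum>r<d. (b r)\<^sup>2) / 2 + \<kappa> * (\<Sum>r<e. (b r)\<^sup>2))) *
           ennreal (normal_density 0 1 t * exp ((b e * s) * t + lam * t\<^sup>2))" .
    qed
    also have "\<dots> = ennreal ((1 - 2 * lam) powr (- real e / 2) *
           exp ((\<Sum>r<d. (b r)\<^sup>2) / 2 + \<kappa> * (\<Sum>r<e. (b r)\<^sup>2))) *
         ennreal (exp ((b e * s)\<^sup>2 * 1\<^sup>2 / (2 * (1 - 2 * lam * 1\<^sup>2))) / sqrt (1 - 2 * lam * 1\<^sup>2))"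
    proof -
      have g: "(\<integral>\<^sup>+t. ennreal (normal_density 0 1 t * exp ((b e * s) * t + lam * t\<^sup>2)) \<partial>lborel)
        = ennreal (exp ((b e * s)\<^sup>2 * 1\<^sup>2 / (2 * (1 - 2 * lam * 1\<^sup>2))) / sqrt (1 - 2 * lam * 1\<^sup>2))"
        by (rule gauss_int) (use lam in auto)
      show ?thesis unfolding g[symmetric] by (rule nn_integral_cmult) measurable
    qed
    also have "\<dots> = ennreal ((1 - 2 * lam) powr (- real (Suc e) / 2) *
           exp ((\<Sum>r<d. (b r)\<^sup>2) / 2 + \<kappa> * (\<Sum>r<Suc e. (b r)\<^sup>2)))"
    proof -
      have p: "(1 - 2 * lam) powr (- real e / 2) / sqrt (1 - 2 * lam) = (1 - 2 * lam) powr (- real (Suc e) / 2)"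
        using lam by (simp add: powr_half_sqrt[symmetric] powr_diff[symmetric] diff_divide_distrib) (rule arg_cong[where f="\<lambda>x. (1 - 2*lam) powr x"], simp)
      have q: "(b e * s)\<^sup>2 * 1\<^sup>2 / (2 * (1 - 2 * lam * 1\<^sup>2)) = \<kappa> * (b e)\<^sup>2"
        unfolding \<kappa>_def power_mult_distrib s2 using lam by (simp add: field_simps)
      show ?thesis unfolding q using lam p[symmetric]
        by (simp add: ennreal_mult[symmetric] exp_add[symmetric] algebra_simps)
    qed
    finally show "(\<integral>\<^sup>+\<omega>. ennreal (exp (lam * (\<Sum>r<Suc e. (vinner n (u r) (W \<omega>) / \<sigma>)\<^sup>2)
             + (\<Sum>r<d. b r * (vinner n (u r) (W \<omega>) / \<sigma>)))) \<partial>M)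
      = ennreal ((1 - 2 * lam) powr (- real (Suc e) / 2) *
           exp ((\<Sum>r<d. (b r)\<^sup>2) / 2 + lam / (1 - 2 * lam) * (\<Sum>r<Suc e. (b r)\<^sup>2)))"
      unfolding Z_def \<kappa>_def .
  qed
qed


lemma key_mgf:
  assumes "finite I" "0 \<le> lam" "lam < 1/2"
  shows "(\<integral>\<^sup>+\<omega>. ennreal (exp (lam * (sqnorm n (proj n X I (W \<omega>)) / \<sigma>\<^sup>2))) \<partial>M)
     \<le> ennreal ((1 - 2 * lam) powr (- real (card I) / 2))"
proof -
  obtain d u where gp: "gsprop n X I d u" using gs_exists[OF assms(1)] by blast
  have on: "orthonormal n d u" and dc: "d \<le> card I" using gp by (auto simp: gsprop_def)
  have eq: "sqnorm n (proj n X I (W \<omega>)) / \<sigma>\<^sup>2 = (\<Sum>r<d. (vinner n (u r) (W \<omega>) / \<sigma>)\<^sup>2)" for \<omega>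
    unfolding sqnorm_proj[OF assms(1) gp] by (simp add: sum_divide_distrib power_divide)
  have "(\<integral>\<^sup>+\<omega>. ennreal (exp (lam * (sqnorm n (proj n X I (W \<omega>)) / \<sigma>\<^sup>2))) \<partial>M)
     = (\<integral>\<^sup>+\<omega>. ennreal (exp (lam * (\<Sum>r<d. (vinner n (u r) (W \<omega>) / \<sigma>)\<^sup>2)
             + (\<Sum>r<d. (\<lambda>_. 0) r * (vinner n (u r) (W \<omega>) / \<sigma>)))) \<partial>M)"
    unfolding eq by simp
  also have "\<dots> = ennreal ((1 - 2 * lam) powr (- real d / 2) *
           exp ((\<Sum>r<d. ((\<lambda>_. 0::real) r)\<^sup>2) / 2 + lam / (1 - 2 * lam) * (\<Sum>r<d. ((\<lambda>_. 0::real) r)\<^sup>2)))"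
    using spec[OF mgf_ind[OF on assms(2,3) order_refl], of "\<lambda>_. 0"] by simp
  also have "\<dots> \<le> ennreal ((1 - 2 * lam) powr (- real (card I) / 2))"
    using assms dc by (auto intro!: ennreal_leI powr_mono')
  finally show ?thesis .
qed

lemma Ysq_meas: "finite I \<Longrightarrow> (\<lambda>\<omega>. sqnorm n (proj n X I (W \<omega>)) / \<sigma>\<^sup>2) \<in> borel_measurable M"
proof -
  assume fin: "finite I"
  obtain d u where gp: "gsprop n X I d u" using gs_exists[OF fin] by blast
  have eq: "(\<lambda>\<omega>. sqnorm n (proj n X I (W \<omega>)) / \<sigma>\<^sup>2) = (\<lambda>\<omega>. \<Sum>r<d. (vinner n (u r) (W \<omega>) / \<sigma>)\<^sup>2)"
    unfolding sqnorm_proj[OF fin gp] by (simp add: sum_divide_distrib power_divide)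
  show ?thesis unfolding eq by measurable
qed

lemma chernoff:
  assumes "finite I" "0 \<le> lam" "lam < 1/2"
  shows "emeasure M {\<omega>\<in>space M. sqnorm n (proj n X I (W \<omega>)) / \<sigma>\<^sup>2 \<ge> x}
     \<le> ennreal (exp (- lam * x) * (1 - 2 * lam) powr (- real (card I) / 2))"
proof -
  let ?Y = "\<lambda>\<omega>. sqnorm n (proj n X I (W \<omega>)) / \<sigma>\<^sup>2"
  have Ym[measurable]: "?Y \<in> borel_measurable M" by (rule Ysq_meas[OF assms(1)])
  have "emeasure M {\<omega>\<in>space M. ?Y \<omega> \<ge> x} = (\<integral>\<^sup>+\<omega>. indicator {\<omega>\<in>space M. ?Y \<omega> \<ge> x} \<omega> \<partial>M)"
    by (rule nn_integral_indicator[symmetric]) measurable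
  also have "\<dots> \<le> (\<integral>\<^sup>+\<omega>. ennreal (exp (- lam * x)) * ennreal (exp (lam * ?Y \<omega>)) \<partial>M)"
  proof (intro nn_integral_mono)
    fix \<omega> assume "\<omega> \<in> space M"
    show "indicator {\<omega>\<in>space M. ?Y \<omega> \<ge> x} \<omega> \<le> ennreal (exp (- lam * x)) * ennreal (exp (lam * ?Y \<omega>))"
    proof (cases "?Y \<omega> \<ge> x")
      case True
      have "1 \<le> exp (- lam * x) * exp (lam * ?Y \<omega>)"
      proof -
        have "lam * x \<le> lam * ?Y \<omega>" using True assms by (intro mult_left_mono) auto
        thus ?thesis by (simp add: exp_add[symmetric] algebra_simps)
      qed
      thus ?thesis using True by (simp add: ennreal_mult[symmetric] indicator_def)
    qed (simp add: indicator_def)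
  qed
  also have "\<dots> = ennreal (exp (- lam * x)) * (\<integral>\<^sup>+\<omega>. ennreal (exp (lam * ?Y \<omega>)) \<partial>M)"
    by (rule nn_integral_cmult) measurable
  also have "\<dots> \<le> ennreal (exp (- lam * x)) * ennreal ((1 - 2 * lam) powr (- real (card I) / 2))"
    by (intro mult_left_mono key_mgf assms) auto
  also have "\<dots> = ennreal (exp (- lam * x) * (1 - 2 * lam) powr (- real (card I) / 2))"
    by (simp add: ennreal_mult)
  finally show ?thesis .
qed

lemma chernoff4:
  assumes "finite I"
  shows "emeasure M {\<omega>\<in>space M. sqnorm n (proj n X I (W \<omega>)) / \<sigma>\<^sup>2 \<ge> x}
     \<le> ennreal (exp (- x / 4 + real (card I) * ln 2 / 2))"
proof -
  have "(1 - 2 * (1/4::real)) powr (- real (card I) / 2) = exp (real (card I) * ln 2 / 2)"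
    by (simp add: powr_def ln_div)
  moreover have "exp (- (1/4) * x) * exp (real (card I) * ln 2 / 2) = exp (- x / 4 + real (card I) * ln 2 / 2)"
    by (simp add: exp_add[symmetric])
  ultimately show ?thesis using chernoff[OF assms, of "1/4" x] by simp
qed

end


lemma num1:
  fixes x c :: real
  assumes "0 \<le> x" "0 \<le> c" "c \<le> x / 4"
  shows "exp (- x / 4 + c * ln 2 / 2) \<le> exp (- x / 16)"
proof -
  have l2: "ln (2::real) \<le> 1" using ln_2_less_1 by simp
  have "c * ln 2 \<le> c * 1" using assms l2 by (intro mult_left_mono) auto
  thus ?thesis using assms by simp
qed

lemma measure_le_from_emeasure:
  assumes "prob_space M" "emeasure M E \<le> ennreal b" "0 \<le> b"
  shows "measure M E \<le> b"
proof -
  interpret prob_space M by fact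
  show ?thesis using assms(2,3) by (simp add: emeasure_eq_measure ennreal_le_iff)
qed

lemma part1:
  assumes iid: "iid_gaussian M W n \<sigma>" and I: "I \<subseteq> {1..k}" and c: "real (card I) \<le> nI"
    and z: "z\<^sup>2 \<ge> 4 * nI"
  shows "measure M {\<omega>\<in>space M. sqnorm n (proj n X I (W \<omega>)) / \<sigma>\<^sup>2 \<ge> z\<^sup>2} \<le> exp (- z\<^sup>2 / 16)"
proof (rule measure_le_from_emeasure)
  show "prob_space M" using iid unfolding iid_gaussian_def by auto
  have fin: "finite I" using I finite_subset by blast
  have "emeasure M {\<omega>\<in>space M. sqnorm n (proj n X I (W \<omega>)) / \<sigma>\<^sup>2 \<ge> z\<^sup>2}
      \<le> ennreal (exp (- z\<^sup>2 / 4 + real (card I) * ln 2 / 2))"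
    by (rule chernoff4[OF iid fin])
  also have "\<dots> \<le> ennreal (exp (- z\<^sup>2 / 16))"
    using c z by (intro ennreal_leI num1) auto
  finally show "emeasure M {\<omega>\<in>space M. sqnorm n (proj n X I (W \<omega>)) / \<sigma>\<^sup>2 \<ge> z\<^sup>2}
      \<le> ennreal (exp (- z\<^sup>2 / 16))" .
qed simp


lemma sum_pow_le: "(\<Sum>l\<le>L. (p::nat) ^ l) \<le> (p + 1) ^ L"
proof (induction L)
  case (Suc L)
  have "(\<Sum>l\<le>Suc L. p ^ l) = (\<Sum>l\<le>L. p ^ l) + p * p ^ L" by simp
  also have "\<dots> \<le> (p + 1) ^ L + p * (p + 1) ^ L"
    using Suc by (intro add_mono mult_left_mono power_mono) auto
  also have "\<dots> = (p + 1) ^ Suc L" by simp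
  finally show ?case .
qed simp

lemma card_F: "card {S. S \<subseteq> {1..(p::nat)} \<and> card S \<le> L} \<le> (p + 1) ^ L"
proof -
  have eq: "{S. S \<subseteq> {1..p} \<and> card S \<le> L} = (\<Union>l\<in>{..L}. {S. S \<subseteq> {1..p} \<and> card S = l})" by auto
  have "card {S. S \<subseteq> {1..p} \<and> card S \<le> L} \<le> (\<Sum>l\<le>L. card {S. S \<subseteq> {1..p} \<and> card S = l})"
    unfolding eq by (rule card_UN_le) auto
  also have "\<dots> = (\<Sum>l\<le>L. p choose l)" by (simp add: n_subsets)
  also have "\<dots> \<le> (\<Sum>l\<le>L. p ^ l)"
  proof (intro sum_mono)
    fix l show "p choose l \<le> p ^ l"
      by (cases "l \<le> p") (auto intro: binomial_le_pow simp: binomial_eq_0)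
  qed
  also have "\<dots> \<le> (p + 1) ^ L" by (rule sum_pow_le)
  finally show ?thesis .
qed

lemma finite_F: "finite {S. S \<subseteq> {1..(p::nat)} \<and> card S \<le> L}"
  by (rule finite_subset[of _ "Pow {1..p}"]) auto

lemma partition_facts:
  assumes "is_group_partition p k G" "j \<in> {1..p}"
  shows "finite (G j)" "G j \<noteq> {}" "card (G j) \<le> tstar p G" "1 \<le> tstar p G" "p \<ge> 1"
proof -
  have sub: "G j \<subseteq> {1..k}" using assms unfolding is_group_partition_def by blast
  show fin: "finite (G j)" using sub finite_subset by blast
  show ne: "G j \<noteq> {}" using assms unfolding is_group_partition_def by auto
  show le: "card (G j) \<le> tstar p G" unfolding tstar_def using assms(2) by (intro Max_ge) auto
  show "1 \<le> tstar p G" using le fin ne by (metis card_0_eq le_trans less_one not_le)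
  show "p \<ge> 1" using assms unfolding is_group_partition_def by auto
qed

lemma union_facts:
  assumes "is_group_partition p k G" "S \<subseteq> {1..p}"
  shows "finite (\<Union>j\<in>S. G j)" "card (\<Union>j\<in>S. G j) \<le> card S * tstar p G"
proof -
  have finS: "finite S" using assms(2) finite_subset by blast
  show "finite (\<Union>j\<in>S. G j)" using finS partition_facts[OF assms(1)] assms(2) by auto
  have "card (\<Union>j\<in>S. G j) \<le> (\<Sum>j\<in>S. card (G j))" by (rule card_UN_le[OF finS])
  also have "\<dots> \<le> (\<Sum>j\<in>S. tstar p G)" using partition_facts(3)[OF assms(1)] assms(2) by (intro sum_mono) auto
  finally show "card (\<Union>j\<in>S. G j) \<le> card S * tstar p G" by simp
qed

lemma num2:
  fixes x t Lr pr c :: real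
  assumes "1 \<le> t" "1 \<le> pr" "0 \<le> Lr" "0 \<le> c" "c \<le> Lr * t" "x \<ge> 16 * Lr * max t (ln pr)"
  shows "exp (Lr * ln (pr + 1)) * exp (- x / 4 + c * ln 2 / 2) \<le> exp (- x / 16)"
proof -
  define Mx where "Mx = max t (ln pr)"
  have M1: "1 \<le> Mx" "t \<le> Mx" "ln pr \<le> Mx" using assms unfolding Mx_def by auto
  have l2: "ln (2::real) \<le> 1" using ln_2_less_1 by simp
  have "ln (pr + 1) \<le> ln (2 * pr)" using assms by simp
  also have "\<dots> = ln 2 + ln pr" using assms by (simp add: ln_mult)
  also have "\<dots> \<le> 2 * Mx" using M1 l2 by simp
  finally have lp: "Lr * ln (pr + 1) \<le> Lr * (2 * Mx)" using assms by (intro mult_left_mono) auto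
  have "c * ln 2 \<le> c * 1" using assms l2 by (intro mult_left_mono) auto
  hence lc: "c * ln 2 \<le> Lr * Mx" using assms M1 by (smt (verit) mult_left_mono)
  have "x \<ge> 16 * Lr * Mx" using assms unfolding Mx_def by simp
  moreover have "Lr * (2 * Mx) = 2 * (Lr * Mx)" "16 * Lr * Mx = 16 * (Lr * Mx)" by auto
  moreover have "Lr * Mx \<ge> 0" using assms M1 by simp
  ultimately have "Lr * ln (pr + 1) + (- x / 4 + c * ln 2 / 2) \<le> - x / 16" using lp lc by linarith
  thus ?thesis by (simp add: exp_add[symmetric])
qed

lemma part2:
  assumes iid: "iid_gaussian M W n \<sigma>" and GP: "is_group_partition p k G"
    and RA: "random_group_set M A p L"
    and z: "z\<^sup>2 \<ge> 16 * real L * max (real (tstar p G)) (ln (real p))"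
  shows "measure M {\<omega>\<in>space M. sqnorm n (proj n X (\<Union>j\<in>A \<omega>. G j) (W \<omega>)) / \<sigma>\<^sup>2 \<ge> z\<^sup>2}
        \<le> exp (- z\<^sup>2 / 16)"
proof (rule measure_le_from_emeasure)
  show PS: "prob_space M" using iid unfolding iid_gaussian_def by auto
  define F where "F = {S. S \<subseteq> {1..p} \<and> card S \<le> L}"
  define E where "E = (\<lambda>S. {\<omega>\<in>space M. sqnorm n (proj n X (\<Union>j\<in>S. G j) (W \<omega>)) / \<sigma>\<^sup>2 \<ge> z\<^sup>2})"
  have finF: "finite F" unfolding F_def by (rule finite_F)
  have p1: "p \<ge> 1" and t1: "1 \<le> tstar p G" using partition_facts[OF GP, of 1] GP
    by (auto simp: is_group_partition_def)
  have ES: "E S \<in> sets M" if "S \<in> F" for S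
  proof -
    have "finite (\<Union>j\<in>S. G j)" using union_facts(1)[OF GP] that unfolding F_def by auto
    from Ysq_meas[OF iid this, of X] show ?thesis unfolding E_def by measurable
  qed
  have sub: "{\<omega>\<in>space M. sqnorm n (proj n X (\<Union>j\<in>A \<omega>. G j) (W \<omega>)) / \<sigma>\<^sup>2 \<ge> z\<^sup>2} \<subseteq> (\<Union>S\<in>F. E S)"
    using RA unfolding random_group_set_def F_def E_def by blast
  have "emeasure M {\<omega>\<in>space M. sqnorm n (proj n X (\<Union>j\<in>A \<omega>. G j) (W \<omega>)) / \<sigma>\<^sup>2 \<ge> z\<^sup>2}
       \<le> emeasure M (\<Union>S\<in>F. E S)"
  proof (cases "{\<omega>\<in>space M. sqnorm n (proj n X (\<Union>j\<in>A \<omega>. G j) (W \<omega>)) / \<sigma>\<^sup>2 \<ge> z\<^sup>2} \<in> sets M")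
    case True
    have "(\<Union>S\<in>F. E S) \<in> sets M" using finF ES by (intro sets.finite_UN) auto
    thus ?thesis using sub by (intro emeasure_mono) auto
  qed (simp add: emeasure_notin_sets)
  also have "\<dots> \<le> (\<Sum>S\<in>F. emeasure M (E S))"
    using finF ES by (intro emeasure_subadditive_finite) auto
  also have "\<dots> \<le> (\<Sum>S\<in>F. ennreal (exp (- z\<^sup>2 / 4 + real (L * tstar p G) * ln 2 / 2)))"
  proof (intro sum_mono)
    fix S assume S: "S \<in> F"
    have fin: "finite (\<Union>j\<in>S. G j)" using union_facts(1)[OF GP] S unfolding F_def by auto
    have "card (\<Union>j\<in>S. G j) \<le> card S * tstar p G" using union_facts(2)[OF GP] S unfolding F_def by auto
    also have "\<dots> \<le> L * tstar p G" using S unfolding F_def by auto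
    finally have c: "real (card (\<Union>j\<in>S. G j)) \<le> real (L * tstar p G)" by linarith
    have "emeasure M (E S) \<le> ennreal (exp (- z\<^sup>2 / 4 + real (card (\<Union>j\<in>S. G j)) * ln 2 / 2))"
      unfolding E_def by (rule chernoff4[OF iid fin])
    also have "\<dots> \<le> ennreal (exp (- z\<^sup>2 / 4 + real (L * tstar p G) * ln 2 / 2))"
      using c by (intro ennreal_leI) (simp add: mult_right_mono)
    finally show "emeasure M (E S) \<le> ennreal (exp (- z\<^sup>2 / 4 + real (L * tstar p G) * ln 2 / 2))" .
  qed
  also have "\<dots> = ennreal (real (card F) * exp (- z\<^sup>2 / 4 + real (L * tstar p G) * ln 2 / 2))"
    by (simp add: ennreal_mult ennreal_of_nat_eq_real_of_nat)
  also have "\<dots> \<le> ennreal (exp (- z\<^sup>2 / 16))"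
  proof (intro ennreal_leI)
    have "real (card F) \<le> real ((p + 1) ^ L)" unfolding F_def using card_F by (simp only: of_nat_le_iff)
    also have "\<dots> = exp (real L * ln (real p + 1))"
      using p1 by (simp add: exp_of_nat_mult add.commute)
    finally have cF: "real (card F) \<le> exp (real L * ln (real p + 1))" .
    have "real (card F) * exp (- z\<^sup>2 / 4 + real (L * tstar p G) * ln 2 / 2)
        \<le> exp (real L * ln (real p + 1)) * exp (- z\<^sup>2 / 4 + real (L * tstar p G) * ln 2 / 2)"
      using cF by (intro mult_right_mono) auto
    also have "\<dots> \<le> exp (- z\<^sup>2 / 16)"
      using t1 p1 z by (intro num2[where t="real (tstar p G)"]) auto
    finally show "real (card F) * exp (- z\<^sup>2 / 4 + real (L * tstar p G) * ln 2 / 2) \<le> exp (- z\<^sup>2 / 16)" .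
  qed
  finally show "emeasure M {\<omega>\<in>space M. sqnorm n (proj n X (\<Union>j\<in>A \<omega>. G j) (W \<omega>)) / \<sigma>\<^sup>2 \<ge> z\<^sup>2}
        \<le> ennreal (exp (- z\<^sup>2 / 16))" .
qed simp



lemma pow_exp_bound:
  fixes y :: real assumes "0 \<le> y" "1 \<le> m"
  shows "y ^ m \<le> (16 * real m) ^ m * exp (y / 16)"
proof -
  define t where "t = y / (16 * real m)"
  have t0: "0 \<le> t" using assms unfolding t_def by simp
  have "t \<le> exp t" using exp_ge_add_one_self[of t] by linarith
  hence "t ^ m \<le> exp t ^ m" using t0 by (intro power_mono) auto
  also have "exp t ^ m = exp (real m * t)" by (rule exp_of_nat_mult[symmetric])
  also have "real m * t = y / 16" unfolding t_def using assms by simp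
  finally have "t ^ m \<le> exp (y / 16)" .
  hence "(16 * real m) ^ m * t ^ m \<le> (16 * real m) ^ m * exp (y / 16)" by (intro mult_left_mono) auto
  moreover have "(16 * real m) ^ m * t ^ m = y ^ m"
  proof -
    have "(16 * real m) * t = y" unfolding t_def using assms by simp
    hence "((16 * real m) * t) ^ m = y ^ m" by simp
    thus ?thesis by (simp only: power_mult_distrib)
  qed
  ultimately show ?thesis by linarith
qed
lemma pointwise_bound:
  fixes y B :: real assumes "0 \<le> y" "0 \<le> B" "1 \<le> m"
  shows "y ^ m \<le> (4 * B) ^ m + (16 * real m) ^ m * exp (y / 8 - B / 4)"
proof (cases "y \<le> 4 * B")
  case True
  have "y ^ m \<le> (4 * B) ^ m" using True assms by (intro power_mono) auto
  moreover have "0 \<le> (16 * real m) ^ m * exp (y / 8 - B / 4)" by simp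
  ultimately show ?thesis by linarith
next
  case False
  have "y ^ m \<le> (16 * real m) ^ m * exp (y / 16)" by (rule pow_exp_bound) (use assms in auto)
  also have "\<dots> \<le> (16 * real m) ^ m * exp (y / 8 - B / 4)" using False by (intro mult_left_mono) auto
  also have "\<dots> \<le> (4 * B) ^ m + (16 * real m) ^ m * exp (y / 8 - B / 4)" using assms by simp
  finally show ?thesis .
qed

lemma num3:
  fixes Lr t pr N :: real
  assumes "1 \<le> Lr" "1 \<le> t" "1 \<le> pr" "0 \<le> N" "N \<le> exp (Lr * ln (pr + 1))" "c \<le> Lr * t"
  shows "(4 * (16 * Lr * max t (ln pr))) ^ m + (16 * real m) ^ m * exp (- (16 * Lr * max t (ln pr)) / 4) *
      (N * exp (c * ln (4/3) / 2))
    \<le> (64 ^ m + (16 * real m) ^ m) * Lr ^ m * (max t (ln pr)) ^ m"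
proof -
  define Mx where "Mx = max t (ln pr)"
  have M1: "1 \<le> Mx" "t \<le> Mx" "ln pr \<le> Mx" using assms unfolding Mx_def by auto
  have l2: "ln (2::real) \<le> 1" using ln_2_less_1 by simp
  have l43: "ln (4/3::real) \<le> 1" using ln_le_minus_one[of "4/3::real"] by simp
  have l43p: "0 \<le> ln (4/3::real)" by simp
  have "ln (pr + 1) \<le> ln (2 * pr)" using assms by simp
  also have "\<dots> = ln 2 + ln pr" using assms by (simp add: ln_mult)
  also have "\<dots> \<le> 2 * Mx" using M1 l2 by simp
  finally have "Lr * ln (pr + 1) \<le> Lr * (2 * Mx)" using assms by (intro mult_left_mono) auto
  hence lp: "Lr * ln (pr + 1) \<le> 2 * (Lr * Mx)" by simp
  have "c * ln (4/3) \<le> Lr * t * ln (4/3)" using assms l43p by (intro mult_right_mono) auto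
  also have "\<dots> \<le> Lr * Mx * 1" using l43 l43p M1 assms by (intro mult_mono) auto
  finally have lc: "c * ln (4/3) \<le> Lr * Mx" by simp
  have LM0: "Lr * Mx \<ge> 1" using assms M1 using mult_mono[of 1 Lr 1 Mx] by simp
  have "N * exp (c * ln (4/3) / 2) \<le> exp (Lr * ln (pr + 1)) * exp (c * ln (4/3) / 2)"
    using assms by (intro mult_right_mono) auto
  also have "\<dots> = exp (Lr * ln (pr + 1) + c * ln (4/3) / 2)" by (rule mult_exp_exp)
  finally have "exp (- (16 * Lr * Mx) / 4) * (N * exp (c * ln (4/3) / 2))
     \<le> exp (- (16 * Lr * Mx) / 4) * exp (Lr * ln (pr + 1) + c * ln (4/3) / 2)" by (intro mult_left_mono) auto
  also have "\<dots> = exp (- (16 * Lr * Mx) / 4 + (Lr * ln (pr + 1) + c * ln (4/3) / 2))" by (rule mult_exp_exp)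
  also have "\<dots> \<le> exp 0" using lp lc LM0 by simp
  finally have E1: "exp (- (16 * Lr * Mx) / 4) * (N * exp (c * ln (4/3) / 2)) \<le> 1" by simp
  have "(16 * real m) ^ m * exp (- (16 * Lr * Mx) / 4) * (N * exp (c * ln (4/3) / 2)) \<le> (16 * real m) ^ m * 1"
    using E1 unfolding mult.assoc by (intro mult_left_mono) auto
  also have "\<dots> \<le> (16 * real m) ^ m * (Lr * Mx) ^ m" using LM0 by (intro mult_left_mono one_le_power) auto
  finally have A: "(16 * real m) ^ m * exp (- (16 * Lr * Mx) / 4) * (N * exp (c * ln (4/3) / 2)) \<le> (16 * real m) ^ m * (Lr * Mx) ^ m" .
  have B0: "4 * (16 * Lr * Mx) = 64 * (Lr * Mx)" by simp
  have B: "(4 * (16 * Lr * Mx)) ^ m = 64 ^ m * (Lr * Mx) ^ m" unfolding B0 by (rule power_mult_distrib)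
  have R: "(64 ^ m + (16 * real m) ^ m) * Lr ^ m * Mx ^ m = 64 ^ m * (Lr * Mx) ^ m + (16 * real m) ^ m * (Lr * Mx) ^ m"
    by (simp only: power_mult_distrib distrib_right mult.assoc)
  show ?thesis using A unfolding Mx_def[symmetric] B R by linarith
qed


lemma part3:
  assumes m: "1 \<le> m" and iid: "iid_gaussian M W n \<sigma>" and GP: "is_group_partition p k G"
    and RA: "random_group_set M A p L"
  shows "(\<integral>\<^sup>+\<omega>. ennreal ((sqnorm n (proj n X (\<Union>j\<in>A \<omega>. G j) (W \<omega>)) / \<sigma>\<^sup>2) ^ m) \<partial>M)
          \<le> ennreal ((64 ^ m + (16 * real m) ^ m) * real L ^ m * max (real (tstar p G)) (ln (real p)) ^ m)"
proof -
  interpret prob_space M using iid unfolding iid_gaussian_def by auto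
  have Aprop: "A \<omega> \<subseteq> {1..p}" "card (A \<omega>) \<le> L" if "\<omega> \<in> space M" for \<omega>
    using RA that unfolding random_group_set_def by auto
  have p1: "p \<ge> 1" and t1: "1 \<le> tstar p G" using partition_facts[OF GP, of 1] GP
    by (auto simp: is_group_partition_def)
  show ?thesis
  proof (cases "L = 0")
    case True
    have "(\<integral>\<^sup>+\<omega>. ennreal ((sqnorm n (proj n X (\<Union>j\<in>A \<omega>. G j) (W \<omega>)) / \<sigma>\<^sup>2) ^ m) \<partial>M) = (\<integral>\<^sup>+\<omega>. 0 \<partial>M)"
    proof (intro nn_integral_cong)
      fix \<omega> assume \<omega>: "\<omega> \<in> space M"
      have "finite (A \<omega>)" using Aprop(1)[OF \<omega>] finite_subset by blast
      hence "A \<omega> = {}" using Aprop(2)[OF \<omega>] True by simp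
      moreover obtain d u where gp: "gsprop n X {} d u" using gs_exists[of "{}"] by blast
      moreover have "d = 0" using gp by (simp add: gsprop_def)
      ultimately have "sqnorm n (proj n X (\<Union>j\<in>A \<omega>. G j) (W \<omega>)) = 0"
        using sqnorm_proj[of "{}" n X d u] by simp
      thus "ennreal ((sqnorm n (proj n X (\<Union>j\<in>A \<omega>. G j) (W \<omega>)) / \<sigma>\<^sup>2) ^ m) = 0" using m by simp
    qed
    thus ?thesis by simp
  next
    case False
    hence L1: "1 \<le> L" by simp
    define Mx where "Mx = max (real (tstar p G)) (ln (real p))"
    define B where "B = 16 * real L * Mx"
    define F where "F = {S. S \<subseteq> {1..p} \<and> card S \<le> L}"
    define Y where "Y = (\<lambda>S \<omega>. sqnorm n (proj n X (\<Union>j\<in>S. G j) (W \<omega>)) / \<sigma>\<^sup>2)"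
    define K where "K = (16 * real m) ^ m * exp (- B / 4)"
    define c0 where "c0 = real (L * tstar p G)"
    have finF: "finite F" unfolding F_def by (rule finite_F)
    have M1: "1 \<le> Mx" unfolding Mx_def using t1 by simp
    have B0: "0 \<le> B" unfolding B_def using M1 by simp
    have Y0: "0 \<le> Y S \<omega>" for S \<omega> unfolding Y_def using sqnorm_nonneg by simp
    have finU: "finite (\<Union>j\<in>S. G j)" if "S \<in> F" for S using union_facts(1)[OF GP] that unfolding F_def by auto
    have Ym: "Y S \<in> borel_measurable M" if "S \<in> F" for S unfolding Y_def by (rule Ysq_meas[OF iid finU[OF that]])
    have AF: "A \<omega> \<in> F" if "\<omega> \<in> space M" for \<omega> using Aprop[OF that] unfolding F_def by auto
    have "(\<integral>\<^sup>+\<omega>. ennreal ((sqnorm n (proj n X (\<Union>j\<in>A \<omega>. G j) (W \<omega>)) / \<sigma>\<^sup>2) ^ m) \<partial>M)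
        \<le> (\<integral>\<^sup>+\<omega>. ennreal ((4 * B) ^ m) + ennreal K * (\<Sum>S\<in>F. ennreal (exp (Y S \<omega> / 8))) \<partial>M)"
    proof (intro nn_integral_mono)
      fix \<omega> assume \<omega>: "\<omega> \<in> space M"
      have "exp (Y (A \<omega>) \<omega> / 8) \<le> (\<Sum>S\<in>F. exp (Y S \<omega> / 8))"
        by (rule member_le_sum[OF AF[OF \<omega>] _ finF]) simp
      hence "exp (- B / 4) * exp (Y (A \<omega>) \<omega> / 8) \<le> exp (- B / 4) * (\<Sum>S\<in>F. exp (Y S \<omega> / 8))"
        by (intro mult_left_mono) auto
      moreover have "exp (Y (A \<omega>) \<omega> / 8 - B / 4) = exp (- B / 4) * exp (Y (A \<omega>) \<omega> / 8)"
        by (simp add: mult_exp_exp)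
      ultimately have "(16 * real m) ^ m * exp (Y (A \<omega>) \<omega> / 8 - B / 4) \<le> K * (\<Sum>S\<in>F. exp (Y S \<omega> / 8))"
        unfolding K_def mult.assoc by (intro mult_left_mono) auto
      hence "(Y (A \<omega>) \<omega>) ^ m \<le> (4 * B) ^ m + K * (\<Sum>S\<in>F. exp (Y S \<omega> / 8))"
        using pointwise_bound[OF Y0 B0 m, of "A \<omega>" \<omega>] by linarith
      hence "ennreal ((Y (A \<omega>) \<omega>) ^ m) \<le> ennreal ((4 * B) ^ m + K * (\<Sum>S\<in>F. exp (Y S \<omega> / 8)))"
        by (rule ennreal_leI)
      also have "\<dots> = ennreal ((4 * B) ^ m) + ennreal K * (\<Sum>S\<in>F. ennreal (exp (Y S \<omega> / 8)))"
        using B0 unfolding K_def by (simp add: ennreal_mult sum_nonneg)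
      finally show "ennreal ((sqnorm n (proj n X (\<Union>j\<in>A \<omega>. G j) (W \<omega>)) / \<sigma>\<^sup>2) ^ m)
          \<le> ennreal ((4 * B) ^ m) + ennreal K * (\<Sum>S\<in>F. ennreal (exp (Y S \<omega> / 8)))"
        unfolding Y_def .
    qed
    also have "\<dots> = ennreal ((4 * B) ^ m) + ennreal K * (\<Sum>S\<in>F. \<integral>\<^sup>+\<omega>. ennreal (exp (Y S \<omega> / 8)) \<partial>M)"
    proof -
      have mS: "(\<lambda>\<omega>. ennreal (exp (Y S \<omega> / 8))) \<in> borel_measurable M" if "S \<in> F" for S
        using Ym[OF that] by measurable
      have "(\<integral>\<^sup>+\<omega>. ennreal ((4 * B) ^ m) + ennreal K * (\<Sum>S\<in>F. ennreal (exp (Y S \<omega> / 8))) \<partial>M)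
          = (\<integral>\<^sup>+\<omega>. ennreal ((4 * B) ^ m) \<partial>M) + (\<integral>\<^sup>+\<omega>. ennreal K * (\<Sum>S\<in>F. ennreal (exp (Y S \<omega> / 8))) \<partial>M)"
        using mS by (intro nn_integral_add) auto
      also have "(\<integral>\<^sup>+\<omega>. ennreal K * (\<Sum>S\<in>F. ennreal (exp (Y S \<omega> / 8))) \<partial>M)
          = ennreal K * (\<integral>\<^sup>+\<omega>. (\<Sum>S\<in>F. ennreal (exp (Y S \<omega> / 8))) \<partial>M)"
        using mS by (intro nn_integral_cmult) auto
      also have "(\<integral>\<^sup>+\<omega>. (\<Sum>S\<in>F. ennreal (exp (Y S \<omega> / 8))) \<partial>M) = (\<Sum>S\<in>F. \<integral>\<^sup>+\<omega>. ennreal (exp (Y S \<omega> / 8)) \<partial>M)"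
        using mS by (intro nn_integral_sum) auto
      finally show ?thesis by (simp add: emeasure_space_1)
    qed
    also have "\<dots> \<le> ennreal ((4 * B) ^ m) + ennreal K * (\<Sum>S\<in>F. ennreal (exp (c0 * ln (4/3) / 2)))"
    proof (intro add_left_mono mult_left_mono sum_mono)
      fix S assume S: "S \<in> F"
      have "(\<integral>\<^sup>+\<omega>. ennreal (exp (Y S \<omega> / 8)) \<partial>M) = (\<integral>\<^sup>+\<omega>. ennreal (exp ((1/8) * Y S \<omega>)) \<partial>M)"
        by (simp add: mult.commute)
      also have "\<dots> \<le> ennreal ((1 - 2 * (1/8)) powr (- real (card (\<Union>j\<in>S. G j)) / 2))"
        unfolding Y_def by (rule key_mgf[OF iid finU[OF S]]) auto
      also have "\<dots> \<le> ennreal ((1 - 2 * (1/8)) powr (- c0 / 2))"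
      proof (intro ennreal_leI powr_mono')
        have "card (\<Union>j\<in>S. G j) \<le> card S * tstar p G" using union_facts(2)[OF GP] S unfolding F_def by auto
        also have "\<dots> \<le> L * tstar p G" using S unfolding F_def by auto
        finally show "- c0 / 2 \<le> - real (card (\<Union>j\<in>S. G j)) / 2" unfolding c0_def by linarith
      qed auto
      also have "(1 - 2 * (1/8::real)) powr (- c0 / 2) = exp (c0 * ln (4/3) / 2)"
        by (simp add: powr_def ln_div algebra_simps)
      finally show "(\<integral>\<^sup>+\<omega>. ennreal (exp (Y S \<omega> / 8)) \<partial>M) \<le> ennreal (exp (c0 * ln (4/3) / 2))" .
    qed simp
    also have "\<dots> = ennreal ((4 * B) ^ m + K * (real (card F) * exp (c0 * ln (4/3) / 2)))"
      using B0 unfolding K_def by (simp add: ennreal_mult ennreal_of_nat_eq_real_of_nat)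
    also have "\<dots> \<le> ennreal ((64 ^ m + (16 * real m) ^ m) * real L ^ m * Mx ^ m)"
    proof (intro ennreal_leI)
      have "real (card F) \<le> real ((p + 1) ^ L)" unfolding F_def using card_F by (simp only: of_nat_le_iff)
      also have "\<dots> = exp (real L * ln (real p + 1))"
        using p1 by (simp add: exp_of_nat_mult add.commute)
      finally have cF: "real (card F) \<le> exp (real L * ln (real p + 1))" .
      show "(4 * B) ^ m + K * (real (card F) * exp (c0 * ln (4/3) / 2)) \<le> (64 ^ m + (16 * real m) ^ m) * real L ^ m * Mx ^ m"
        using num3[of "real L" "real (tstar p G)" "real p" "real (card F)" c0 m] L1 t1 p1 cF
        unfolding B_def K_def Mx_def c0_def by (simp add: mult.assoc)
    qed
    finally show ?thesis unfolding Mx_def .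
  qed
qed

theorem proposition3:
  shows
  "(\<forall>(M::'a measure) W n \<sigma> (X::nat \<Rightarrow> nat \<Rightarrow> real) k I (nI::real) (z::real).
      iid_gaussian M W n \<sigma> \<and> I \<subseteq> {1..k} \<and> real (card I) \<le> nI \<and> z\<^sup>2 \<ge> 4 * nI \<longrightarrow>
      measure M {\<omega>\<in>space M. sqnorm n (proj n X I (W \<omega>)) / \<sigma>\<^sup>2 \<ge> z\<^sup>2} \<le> exp (- z\<^sup>2 / 16))
   \<and> (\<forall>(M::'a measure) W n \<sigma> (X::nat \<Rightarrow> nat \<Rightarrow> real) k p G A (L::nat) (z::real).
      iid_gaussian M W n \<sigma> \<and> is_group_partition p k G \<and> random_group_set M A p L \<and>
      z\<^sup>2 \<ge> 16 * real L * max (real (tstar p G)) (ln (real p)) \<longrightarrow>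
      measure M {\<omega>\<in>space M. sqnorm n (proj n X (\<Union>j\<in>A \<omega>. G j) (W \<omega>)) / \<sigma>\<^sup>2 \<ge> z\<^sup>2}
        \<le> exp (- z\<^sup>2 / 16))
   \<and> (\<forall>m::nat. m \<ge> 1 \<longrightarrow> (\<exists>C::real.
      \<forall>(M::'a measure) W n \<sigma> (X::nat \<Rightarrow> nat \<Rightarrow> real) k p G A (L::nat).
        iid_gaussian M W n \<sigma> \<and> is_group_partition p k G \<and> random_group_set M A p L \<longrightarrow>
        (\<integral>\<^sup>+\<omega>. ennreal ((sqnorm n (proj n X (\<Union>j\<in>A \<omega>. G j) (W \<omega>)) / \<sigma>\<^sup>2) ^ m) \<partial>M)
          \<le> ennreal (C * real L ^ m * max (real (tstar p G)) (ln (real p)) ^ m)))"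
proof (intro conjI allI impI)
  fix M :: "'a measure" and W n \<sigma> and X :: "nat \<Rightarrow> nat \<Rightarrow> real" and k :: nat and I :: "nat set" and nI :: real and z :: real
  assume "iid_gaussian M W n \<sigma> \<and> I \<subseteq> {1..k} \<and> real (card I) \<le> nI \<and> z\<^sup>2 \<ge> 4 * nI"
  thus "measure M {\<omega>\<in>space M. sqnorm n (proj n X I (W \<omega>)) / \<sigma>\<^sup>2 \<ge> z\<^sup>2} \<le> exp (- z\<^sup>2 / 16)"
    using part1 by blast
next
  fix M :: "'a measure" and W n \<sigma> and X :: "nat \<Rightarrow> nat \<Rightarrow> real" and k :: nat and p :: nat and G :: "nat \<Rightarrow> nat set" and A :: "'a \<Rightarrow> nat set" and L :: nat and z :: real
  assume "iid_gaussian M W n \<sigma> \<and> is_group_partition p k G \<and> random_group_set M A p L \<and>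
      z\<^sup>2 \<ge> 16 * real L * max (real (tstar p G)) (ln (real p))"
  thus "measure M {\<omega>\<in>space M. sqnorm n (proj n X (\<Union>j\<in>A \<omega>. G j) (W \<omega>)) / \<sigma>\<^sup>2 \<ge> z\<^sup>2}
        \<le> exp (- z\<^sup>2 / 16)"
    using part2 by blast
next
  fix m :: nat assume m: "m \<ge> 1"
  show "\<exists>C::real.
      \<forall>(M::'a measure) W n \<sigma> (X::nat \<Rightarrow> nat \<Rightarrow> real) k p G A (L::nat).
        iid_gaussian M W n \<sigma> \<and> is_group_partition p k G \<and> random_group_set M A p L \<longrightarrow>
        (\<integral>\<^sup>+\<omega>. ennreal ((sqnorm n (proj n X (\<Union>j\<in>A \<omega>. G j) (W \<omega>)) / \<sigma>\<^sup>2) ^ m) \<partial>M)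
          \<le> ennreal (C * real L ^ m * max (real (tstar p G)) (ln (real p)) ^ m)"
    using part3[OF m] by blast
qed

end
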